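(* There is an absolute constant $C$ such that for every finite set $\mathcal{U}\subset\mathbb{R}$ there exists a family of finite automata (one per degree $d$), in which each node $i$ at each time step additionally reads its current input $u_i(t)\in\mathcal{U}$ and maintains variables $M_i(t)\in\mathcal{U}$ and $P_i(t)\in\{i\}\cup N(i)$, whose state at node $i$ can be stored in at most $C(\log|\mathcal{U}|+d(i))$ bits, with the following property. For every network and every collection of input sequences $(u_i(t))_{t\ge0}$, $u_i(t)\in\mathcal{U}$, for which there exists $T'$ with $u_i(t)=u_i(T')$ for all $i$ and all $t\ge T'$, there exists $T''$ such that for all $t\ge T''$: (i) $M_i(t)=\max_{j=1,\ldots,n}u_j(t)$ for every node $i$; and (ii) for every node $i$ there exist a node $j$ and an integer $K_0$ with $P_i^k(t)=j$ for all $k\ge K_0$, and $M_i(t)=u_j(t)$, where $P_i^1(t)=P_i(t)$ and $P_i^{k+1}(t)=P_{P_i^k(t)}(t)$.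
   Context: A network is a finite connected simple undirected graph $G=(V,E)$ with $V=\{1,\ldots,n\}$, together with a port labeling: for each node $i$ of degree $d(i)$, a bijection $\ell_i$ from the set $N(i)$ of neighbors of $i$ to $\{1,\ldots,d(i)\}$. Nodes run identical deterministic finite automata depending only on their degree, synchronously: at each round each node sends one message (from a finite message set) through each of its ports, and its next state depends only on its current state, its current input $u_i(t)$, and the messages received from each port (with neighbors distinguished only through local port numbers). Nodes have no global identifiers and no knowledge of $n$ or the graph; in particular the automata must work for every network and every port labeling. *)

theory Defs
  imports Complex_Main
begin

definition nbrs :: "(nat \<Rightarrow> nat \<Rightarrow> bool) \<Rightarrow> nat \<Rightarrow> nat set" where
  "nbrs E i = {j. E i j}"

definition deg :: "(nat \<Rightarrow> nat \<Rightarrow> bool) \<Rightarrow> nat \<Rightarrow> nat" where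
  "deg E i = card (nbrs E i)"

definition network :: "nat \<Rightarrow> (nat \<Rightarrow> nat \<Rightarrow> bool) \<Rightarrow> (nat \<Rightarrow> nat \<Rightarrow> nat) \<Rightarrow> bool" where
  "network n E lab \<longleftrightarrow>
     n \<ge> 1 \<and>
     (\<forall>i j. E i j \<longrightarrow> i \<in> {1..n} \<and> j \<in> {1..n}) \<and>
     (\<forall>i j. E i j \<longrightarrow> E j i) \<and>
     (\<forall>i. \<not> E i i) \<and>
     (\<forall>i\<in>{1..n}. \<forall>j\<in>{1..n}. E\<^sup>*\<^sup>* i j) \<and>
     (\<forall>i\<in>{1..n}. bij_betw (lab i) (nbrs E i) {1..deg E i})"

definition port_nbr :: "(nat \<Rightarrow> nat \<Rightarrow> bool) \<Rightarrow> (nat \<Rightarrow> nat \<Rightarrow> nat) \<Rightarrow> nat \<Rightarrow> nat \<Rightarrow> nat" where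
  "port_nbr E lab i p = (THE j. E i j \<and> lab i j = p)"

text \<open>Automata family (indexed by degree d), states encoded as naturals below Q d:
  init d = initial state, delta d s v r = next state from state s, input v and
  received messages r (r p = message received on port p, p = 1..d),
  msg d s p = message sent on port p in state s,
  Mout d s = the variable M, Pout d s = the variable P (0 = self, p = neighbor at port p).\<close>
definition valid_automata ::
  "real set \<Rightarrow> real \<Rightarrow> (nat \<Rightarrow> nat) \<Rightarrow> (nat \<Rightarrow> nat) \<Rightarrow>
   (nat \<Rightarrow> nat \<Rightarrow> real \<Rightarrow> (nat \<Rightarrow> nat) \<Rightarrow> nat) \<Rightarrow>
   (nat \<Rightarrow> nat \<Rightarrow> real) \<Rightarrow> (nat \<Rightarrow> nat \<Rightarrow> nat) \<Rightarrow> bool" where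
  "valid_automata U C Q init delta Mout Pout \<longleftrightarrow>
     (\<forall>d. init d < Q d \<and>
          real (Q d) \<le> 2 powr (C * (log 2 (real (card U)) + real d)) \<and>
          (\<forall>s < Q d. \<forall>v \<in> U. \<forall>r. delta d s v r < Q d) \<and>
          (\<forall>s < Q d. Mout d s \<in> U \<and> Pout d s \<le> d))"

text \<open>Synchronous execution: run ... u t i is the state of node i at time t;
  u i t is the input of node i at time t.\<close>
primrec run ::
  "(nat \<Rightarrow> nat \<Rightarrow> bool) \<Rightarrow> (nat \<Rightarrow> nat \<Rightarrow> nat) \<Rightarrow> (nat \<Rightarrow> nat) \<Rightarrow>
   (nat \<Rightarrow> nat \<Rightarrow> real \<Rightarrow> (nat \<Rightarrow> nat) \<Rightarrow> nat) \<Rightarrow> (nat \<Rightarrow> nat \<Rightarrow> nat \<Rightarrow> nat) \<Rightarrow>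
   (nat \<Rightarrow> nat \<Rightarrow> real) \<Rightarrow> nat \<Rightarrow> nat \<Rightarrow> nat" where
  "run E lab init delta msg u 0 = (\<lambda>i. init (deg E i))"
| "run E lab init delta msg u (Suc t) =
     (\<lambda>i. delta (deg E i) (run E lab init delta msg u t i) (u i t)
        (\<lambda>p. if p \<in> {1..deg E i}
              then (let j = port_nbr E lab i p
                    in msg (deg E j) (run E lab init delta msg u t j) (lab j i))
              else 0))"

definition ptr :: "(nat \<Rightarrow> nat \<Rightarrow> bool) \<Rightarrow> (nat \<Rightarrow> nat \<Rightarrow> nat) \<Rightarrow> (nat \<Rightarrow> nat \<Rightarrow> nat) \<Rightarrow>
   (nat \<Rightarrow> nat) \<Rightarrow> nat \<Rightarrow> nat" where
  "ptr E lab Pout x i = (let p = Pout (deg E i) (x i) in if p = 0 then i else port_nbr E lab i p)"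

end

theory Submission
  imports Defs
begin


definition lstep :: "nat \<Rightarrow> real \<times> nat \<times> bool \<Rightarrow> real \<Rightarrow> (nat \<Rightarrow> real \<times> bool \<times> bool) \<Rightarrow> real \<times> nat \<times> bool" where
"lstep d x v nb = (let m = fst x; p = fst (snd x); r = snd (snd x);
    NP = {q\<in>{1..d}. \<not> fst (snd (nb q))};
    b = Max ((\<lambda>q. fst (nb q)) ` NP);
    bp = (LEAST q. q \<in> NP \<and> fst (nb q) = b) in
  if r then (if (\<exists>q\<in>{1..d}. snd (snd (nb q))) then (m,p,True) else (v,0,False))
  else if p = 0 then (if v < m then (m,0,True) else if NP \<noteq> {} \<and> b > v then (b, bp, False) else (v,0,False))
  else if fst (snd (nb p)) then (m,p,True)
  else if v > b then (v,0,False)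
  else if fst (nb p) = b then (b,p,False) else (b,bp,False))"

lemma lstep_cong:
  assumes "\<And>q. q \<in> {1..d} \<Longrightarrow> nb q = nb' q" "fst (snd x) \<le> d"
  shows "lstep d x v nb = lstep d x v nb'"
proof -
  have "{q\<in>{1..d}. \<not> fst (snd (nb q))} = {q\<in>{1..d}. \<not> fst (snd (nb' q))}" using assms by auto
  moreover have "(\<lambda>q. fst (nb q)) ` {q\<in>{1..d}. \<not> fst (snd (nb' q))} = (\<lambda>q. fst (nb' q)) ` {q\<in>{1..d}. \<not> fst (snd (nb' q))}"
    using assms by (auto intro!: image_cong)
  moreover have "\<And>b. (LEAST q. q \<in> {q\<in>{1..d}. \<not> fst (snd (nb' q))} \<and> fst (nb q) = b) = (LEAST q. q \<in> {q\<in>{1..d}. \<not> fst (snd (nb' q))} \<and> fst (nb' q) = b)"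
    using assms by (metis (no_types, lifting) mem_Collect_eq)
  moreover have "(\<exists>q\<in>{1..d}. snd (snd (nb q))) = (\<exists>q\<in>{1..d}. snd (snd (nb' q)))" using assms by auto
  moreover have "fst (snd x) \<noteq> 0 \<Longrightarrow> nb (fst (snd x)) = nb' (fst (snd x))" using assms by auto
  ultimately show ?thesis unfolding lstep_def Let_def by (auto split: if_splits)
qed

lemma lstep_alt:
  assumes "NP = {q\<in>{1..d}. \<not> fst (snd (nb q))}" "B = Max ((\<lambda>q. fst (nb q)) ` NP)"
    "CH = (\<exists>q\<in>{1..d}. snd (snd (nb q)))"
  shows "lstep d (m,p,r) v nb = (if r then (if CH then (m,p,True) else (v,0,False))
    else if p = 0 then (if v < m then (m,0,True) else if NP \<noteq> {} \<and> B > v then (B, LEAST q. q \<in> NP \<and> fst (nb q) = B, False) else (v,0,False))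
    else if fst (snd (nb p)) then (m,p,True)
    else if v > B then (v,0,False)
    else if fst (nb p) = B then (B,p,False) else (B,LEAST q. q \<in> NP \<and> fst (nb q) = B,False))"
  unfolding assms lstep_def Let_def by simp

locale alg =
  fixes n :: nat and E :: "nat \<Rightarrow> nat \<Rightarrow> bool" and lab :: "nat \<Rightarrow> nat \<Rightarrow> nat"
    and u :: "nat \<Rightarrow> nat \<Rightarrow> real" and U :: "real set" and u0 :: real
  assumes net: "network n E lab"
  and uU: "\<And>i t. i\<in>{1..n} \<Longrightarrow> u i t \<in> U"
  and finU: "finite U" and u0U: "u0 \<in> U"
begin

abbreviation "V \<equiv> {1..n}"

lemma n1: "n \<ge> 1" using net unfolding network_def by auto
lemma E_V: "E i j \<Longrightarrow> i \<in> V \<and> j \<in> V" using net unfolding network_def by blast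
lemma E_sym: "E i j \<Longrightarrow> E j i" using net unfolding network_def by blast
lemma E_irr: "\<not> E i i" using net unfolding network_def by blast
lemma E_conn: "i \<in> V \<Longrightarrow> j \<in> V \<Longrightarrow> E\<^sup>*\<^sup>* i j" using net unfolding network_def by blast
lemma lab_bij: "i \<in> V \<Longrightarrow> bij_betw (lab i) (nbrs E i) {1..deg E i}" using net unfolding network_def by blast
lemma fin_nbrs: "finite (nbrs E i)"
  by (rule finite_subset[of _ V]) (auto simp: nbrs_def dest: E_V)

lemma port_nbr_ok:
  assumes "i \<in> V" "p \<in> {1..deg E i}"
  shows "E i (port_nbr E lab i p) \<and> lab i (port_nbr E lab i p) = p"
proof -
  from lab_bij[OF assms(1)] assms(2) obtain j where j: "j \<in> nbrs E i" "lab i j = p"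
    unfolding bij_betw_def by (metis imageE)
  have inj: "inj_on (lab i) (nbrs E i)" using lab_bij[OF assms(1)] unfolding bij_betw_def by blast
  have uniq: "\<And>j'. E i j' \<and> lab i j' = p \<Longrightarrow> j' = j"
  proof -
    fix j' assume "E i j' \<and> lab i j' = p"
    then show "j' = j" using inj_onD[OF inj, of j' j] j by (auto simp: nbrs_def)
  qed
  have "port_nbr E lab i p = j" unfolding port_nbr_def
    apply (rule the_equality)
    using j apply (simp add: nbrs_def)
    using uniq apply blast
    done
  thus ?thesis using j by (auto simp: nbrs_def)
qed

lemma lab_ok:
  assumes "E i j"
  shows "lab i j \<in> {1..deg E i} \<and> port_nbr E lab i (lab i j) = j"
proof -
  have i: "i \<in> V" using E_V assms by auto
  have l: "lab i j \<in> {1..deg E i}" using lab_bij[OF i] assms unfolding bij_betw_def nbrs_def by auto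
  have "E i (port_nbr E lab i (lab i j)) \<and> lab i (port_nbr E lab i (lab i j)) = lab i j"
    using port_nbr_ok[OF i l] .
  have inj: "inj_on (lab i) (nbrs E i)" using lab_bij[OF i] unfolding bij_betw_def by blast
  hence "port_nbr E lab i (lab i j) = j"
    using inj_onD[OF inj, of "port_nbr E lab i (lab i j)" j] assms \<open>E i (port_nbr E lab i (lab i j)) \<and> _\<close> by (auto simp: nbrs_def)
  thus ?thesis using l by auto
qed

end



context alg begin

primrec arun :: "nat \<Rightarrow> nat \<Rightarrow> real \<times> nat \<times> bool" where
  "arun 0 = (\<lambda>i. (u0, 0, False))"
| "arun (Suc t) = (\<lambda>i. lstep (deg E i) (arun t i) (u i t)
     (\<lambda>q. let j = port_nbr E lab i q in (fst (arun t j), snd (snd (arun t j)), fst (snd (arun t j)) = lab j i)))"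

definition "M t i = fst (arun t i)"
definition "P t i = fst (snd (arun t i))"
definition "R t i = snd (snd (arun t i))"
definition "par t i = (if P t i = 0 then i else port_nbr E lab i (P t i))"
definition "NPn t i = {j. E i j \<and> \<not> R t j}"
definition "bv t i = Max (M t ` NPn t i)"
definition "hasch t i = (\<exists>j. E i j \<and> par t j = i)"
definition "W t = (\<forall>i\<in>V. M t i \<in> U \<and> P t i \<le> deg E i)"

lemma arun_eq: "arun t i = (M t i, P t i, R t i)" by (simp add: M_def P_def R_def)

lemma par_nbr: "i \<in> V \<Longrightarrow> W t \<Longrightarrow> P t i \<noteq> 0 \<Longrightarrow> E i (par t i)"
  using port_nbr_ok[of i "P t i"] unfolding W_def par_def by auto

lemma par_V: "par t i \<in> V" if "i \<in> V" "W t"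
proof (cases "P t i = 0")
  case True
  then show ?thesis using that by (simp add: par_def)
next
  case False
  then have "E i (par t i)" using par_nbr that by blast
  then show ?thesis using E_V by blast
qed

lemma par_ne: "i \<in> V \<Longrightarrow> W t \<Longrightarrow> P t i \<noteq> 0 \<Longrightarrow> par t i \<noteq> i"
  using par_nbr[of i t] E_irr by metis

lemma par_root: "P t i = 0 \<Longrightarrow> par t i = i" by (simp add: par_def)

lemma points_iff:
  assumes "E i j" "W t"
  shows "(P t j = lab j i) \<longleftrightarrow> par t j = i"
proof -
  have j: "j \<in> V" and ji: "E j i" using E_V E_sym assms by auto
  show ?thesis
  proof
    assume h: "P t j = lab j i"
    then have "P t j \<noteq> 0" using lab_ok[OF ji] by auto
    thus "par t j = i" using h lab_ok[OF ji] by (simp add: par_def)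
  next
    assume h: "par t j = i"
    have "i \<noteq> j" using assms E_irr by auto
    hence "P t j \<noteq> 0" using h by (auto simp: par_def split: if_splits)
    hence "P t j \<in> {1..deg E j}" using assms(2) j unfolding W_def by auto
    thus "P t j = lab j i" using port_nbr_ok[OF j] h by (auto simp: par_def)
  qed
qed

lemma fin_NPn: "finite (NPn t i)"
  by (rule finite_subset[OF _ fin_nbrs[of i]]) (auto simp: NPn_def nbrs_def)

definition "NPp t i = {q\<in>{1..deg E i}. \<not> R t (port_nbr E lab i q)}"

lemma NPp_img: "i \<in> V \<Longrightarrow> port_nbr E lab i ` NPp t i = NPn t i"
proof -
  assume i: "i \<in> V"
  show ?thesis
  proof
    show "port_nbr E lab i ` NPp t i \<subseteq> NPn t i"
      using port_nbr_ok[OF i] by (auto simp: NPp_def NPn_def)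
    show "NPn t i \<subseteq> port_nbr E lab i ` NPp t i"
    proof
      fix j assume "j \<in> NPn t i"
      hence j: "E i j" "\<not> R t j" by (auto simp: NPn_def)
      hence "lab i j \<in> NPp t i" using lab_ok[OF j(1)] by (auto simp: NPp_def)
      thus "j \<in> port_nbr E lab i ` NPp t i" using lab_ok[OF j(1)] by force
    qed
  qed
qed

definition "bpn t i = port_nbr E lab i (LEAST q. q \<in> NPp t i \<and> M t (port_nbr E lab i q) = bv t i)"

lemma bpn_ok:
  assumes "i \<in> V" "NPn t i \<noteq> {}"
  shows "bpn t i \<in> NPn t i \<and> M t (bpn t i) = bv t i"
proof -
  have "bv t i \<in> M t ` NPn t i" unfolding bv_def using assms fin_NPn by (intro Max_in) auto
  then obtain j where j: "j \<in> NPn t i" "M t j = bv t i" by auto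
  then obtain q where q: "q \<in> NPp t i" "port_nbr E lab i q = j" using NPp_img[OF assms(1)] by force
  hence ex: "\<exists>q. q \<in> NPp t i \<and> M t (port_nbr E lab i q) = bv t i" using j by auto
  let ?q = "LEAST q. q \<in> NPp t i \<and> M t (port_nbr E lab i q) = bv t i"
  have "?q \<in> NPp t i \<and> M t (port_nbr E lab i ?q) = bv t i" using LeastI_ex[OF ex] .
  thus ?thesis unfolding bpn_def using NPp_img[OF assms(1)] by blast
qed

lemma hasch_iff:
  assumes "i \<in> V" "W t"
  shows "(\<exists>q\<in>{1..deg E i}. P t (port_nbr E lab i q) = lab (port_nbr E lab i q) i) \<longleftrightarrow> hasch t i"
proof
  assume "\<exists>q\<in>{1..deg E i}. P t (port_nbr E lab i q) = lab (port_nbr E lab i q) i"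
  then obtain q where q: "q \<in> {1..deg E i}" "P t (port_nbr E lab i q) = lab (port_nbr E lab i q) i" by auto
  have e: "E i (port_nbr E lab i q)" using port_nbr_ok[OF assms(1) q(1)] by auto
  have "par t (port_nbr E lab i q) = i" using points_iff[OF e assms(2)] q(2) by simp
  thus "hasch t i" using e unfolding hasch_def by blast
next
  assume "hasch t i"
  then obtain j where j: "E i j" "par t j = i" unfolding hasch_def by auto
  have l: "lab i j \<in> {1..deg E i}" "port_nbr E lab i (lab i j) = j" using lab_ok[OF j(1)] by auto
  have "P t j = lab j i" using points_iff[OF j(1) assms(2)] j(2) by simp
  thus "\<exists>q\<in>{1..deg E i}. P t (port_nbr E lab i q) = lab (port_nbr E lab i q) i"
    using l by (intro bexI[of _ "lab i j"]) simp_all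
qed

lemma arun_Suc_node [rule_format]:
  assumes i: "i \<in> V" and w: "W t"
  shows "arun (Suc t) i =
   (if R t i then (if hasch t i then (M t i, P t i, True) else (u i t, 0, False))
    else if P t i = 0 then (if u i t < M t i then (M t i, 0, True)
        else if NPn t i \<noteq> {} \<and> bv t i > u i t then (bv t i, lab i (bpn t i), False) else (u i t, 0, False))
    else if R t (par t i) then (M t i, P t i, True)
    else if u i t > bv t i then (u i t, 0, False)
    else if M t (par t i) = bv t i then (bv t i, P t i, False) else (bv t i, lab i (bpn t i), False))" (is "_ = ?rhs")
proof -
  let ?nb = "\<lambda>q. let j = port_nbr E lab i q in (fst (arun t j), snd (snd (arun t j)), fst (snd (arun t j)) = lab j i)"
  have NP: "{q\<in>{1..deg E i}. \<not> fst (snd (?nb q))} = NPp t i" by (auto simp: NPp_def R_def Let_def)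
  have img: "(\<lambda>q. fst (?nb q)) ` NPp t i = M t ` NPn t i"
    unfolding NPp_img[OF i, of t, symmetric] by (simp add: image_image M_def Let_def)
  have bp: "(LEAST q. q \<in> NPp t i \<and> fst (?nb q) = bv t i) = lab i (bpn t i)" if ne: "NPn t i \<noteq> {}"
  proof -
    let ?q = "LEAST q. q \<in> NPp t i \<and> M t (port_nbr E lab i q) = bv t i"
    have "(\<lambda>q. q \<in> NPp t i \<and> fst (?nb q) = bv t i) = (\<lambda>q. q \<in> NPp t i \<and> M t (port_nbr E lab i q) = bv t i)"
      by (auto simp: M_def Let_def)
    hence e: "(LEAST q. q \<in> NPp t i \<and> fst (?nb q) = bv t i) = ?q" by simp
    have "\<exists>q. q \<in> NPp t i \<and> M t (port_nbr E lab i q) = bv t i"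
    proof -
      obtain j where "j \<in> NPn t i" "M t j = bv t i" using bpn_ok[OF i ne] by blast
      thus ?thesis using NPp_img[OF i, of t] by force
    qed
    hence "?q \<in> NPp t i" by (metis (mono_tags, lifting) LeastI_ex)
    hence "?q \<in> {1..deg E i}" by (auto simp: NPp_def)
    hence "lab i (port_nbr E lab i ?q) = ?q" using port_nbr_ok[OF i] by auto
    thus ?thesis using e unfolding bpn_def by simp
  qed
  have ch: "(\<exists>q\<in>{1..deg E i}. snd (snd (?nb q))) = hasch t i"
    using hasch_iff[OF i w] by (simp add: Let_def P_def)
  have pp: "P t i \<noteq> 0 \<Longrightarrow> ?nb (P t i) = (M t (par t i), R t (par t i), P t (par t i) = lab (par t i) i)"
    by (simp add: par_def M_def R_def P_def Let_def)
  have NPne: "P t i \<noteq> 0 \<Longrightarrow> \<not> R t (par t i) \<Longrightarrow> NPn t i \<noteq> {}"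
    using par_nbr[OF i w] by (auto simp: NPn_def)
  let ?BP = "LEAST q. q \<in> NPp t i \<and> fst (?nb q) = bv t i"
  have B: "bv t i = Max ((\<lambda>q. fst (?nb q)) ` NPp t i)" using img by (simp add: bv_def)
  have "arun (Suc t) i = lstep (deg E i) (M t i, P t i, R t i) (u i t) ?nb" by (simp add: arun_eq[symmetric])
  also have "\<dots> = (if R t i then (if hasch t i then (M t i, P t i, True) else (u i t, 0, False))
    else if P t i = 0 then (if u i t < M t i then (M t i, 0, True)
        else if NPp t i \<noteq> {} \<and> bv t i > u i t then (bv t i, ?BP, False) else (u i t, 0, False))
    else if fst (snd (?nb (P t i))) then (M t i, P t i, True)
    else if u i t > bv t i then (u i t, 0, False)
    else if fst (?nb (P t i)) = bv t i then (bv t i, P t i, False) else (bv t i, ?BP, False))"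
    by (rule lstep_alt[OF NP[symmetric] B ch[symmetric]])
  also have "\<dots> = ?rhs" using bp pp NPne NPp_img[OF i, of t] by auto
  finally show ?thesis .
qed

end



context alg begin

lemma bv_ge: "j \<in> NPn t i \<Longrightarrow> M t j \<le> bv t i"
  unfolding bv_def using fin_NPn by (intro Max_ge) auto

lemma NPn_E: "j \<in> NPn t i \<Longrightarrow> E i j \<and> \<not> R t j" by (simp add: NPn_def)

lemma par_in_NPn: "i \<in> V \<Longrightarrow> W t \<Longrightarrow> P t i \<noteq> 0 \<Longrightarrow> \<not> R t (par t i) \<Longrightarrow> par t i \<in> NPn t i"
  using par_nbr by (auto simp: NPn_def)

lemma W0: "W 0" using u0U by (simp add: W_def M_def P_def)

lemma W_Suc:
  assumes w: "W t" shows "W (Suc t)"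
  unfolding W_def
proof
  fix i assume i: "i \<in> V"
  have bvU: "bv t i \<in> U" if ne0: "NPn t i \<noteq> {}"
  proof -
    obtain j where "j \<in> NPn t i" "M t j = bv t i" using bpn_ok[OF i ne0] by blast
    moreover have "j \<in> V" using \<open>j \<in> NPn t i\<close> E_V by (auto simp: NPn_def)
    ultimately show ?thesis using w unfolding W_def by metis
  qed
  have lb: "lab i (bpn t i) \<le> deg E i" if "NPn t i \<noteq> {}"
  proof -
    have "E i (bpn t i)" using bpn_ok[OF i that] by (auto simp: NPn_def)
    thus ?thesis using lab_ok by auto
  qed
  have mi: "M t i \<in> U" "P t i \<le> deg E i" using w i by (auto simp: W_def)
  have ui: "u i t \<in> U" using uU i by auto
  have ne: "P t i \<noteq> 0 \<Longrightarrow> \<not> R t (par t i) \<Longrightarrow> NPn t i \<noteq> {}" using par_in_NPn[OF i w] by auto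
  show "M (Suc t) i \<in> U \<and> P (Suc t) i \<le> deg E i"
    unfolding M_def P_def arun_Suc_node[OF i w]
    using bvU lb mi ui ne by (auto simp: M_def P_def)
qed

lemma W_all: "W t" by (induction t) (auto intro: W0 W_Suc)

lemma M_Suc: "i \<in> V \<Longrightarrow> M (Suc t) i = (if R t i then (if hasch t i then M t i else u i t)
    else if P t i = 0 then (if u i t < M t i then M t i else if NPn t i \<noteq> {} \<and> bv t i > u i t then bv t i else u i t)
    else if R t (par t i) then M t i else if u i t > bv t i then u i t else bv t i)"
  unfolding M_def[of "Suc t"] arun_Suc_node[OF _ W_all] by auto

lemma P_Suc: "i \<in> V \<Longrightarrow> P (Suc t) i = (if R t i then (if hasch t i then P t i else 0)
    else if P t i = 0 then (if u i t < M t i then 0 else if NPn t i \<noteq> {} \<and> bv t i > u i t then lab i (bpn t i) else 0)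
    else if R t (par t i) then P t i else if u i t > bv t i then 0 else if M t (par t i) = bv t i then P t i else lab i (bpn t i))"
  unfolding P_def[of "Suc t"] arun_Suc_node[OF _ W_all] by auto

lemma R_Suc: "i \<in> V \<Longrightarrow> R (Suc t) i = (if R t i then hasch t i
    else if P t i = 0 then u i t < M t i else R t (par t i))"
  unfolding R_def[of "Suc t"] arun_Suc_node[OF _ W_all] by auto

lemma bpn_lab: "i \<in> V \<Longrightarrow> NPn t i \<noteq> {} \<Longrightarrow> lab i (bpn t i) \<noteq> 0 \<and> port_nbr E lab i (lab i (bpn t i)) = bpn t i"
  using bpn_ok[of i t] lab_ok[of i "bpn t i"] by (auto simp: NPn_def)

lemma par_Suc: "i \<in> V \<Longrightarrow> par (Suc t) i = (if R t i then (if hasch t i then par t i else i)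
    else if P t i = 0 then (if u i t < M t i then i else if NPn t i \<noteq> {} \<and> bv t i > u i t then bpn t i else i)
    else if R t (par t i) then par t i else if u i t > bv t i then i else if M t (par t i) = bv t i then par t i else bpn t i)"
proof -
  assume i: "i \<in> V"
  have ne: "P t i \<noteq> 0 \<Longrightarrow> \<not> R t (par t i) \<Longrightarrow> NPn t i \<noteq> {}" using par_in_NPn[OF i W_all] by auto
  show ?thesis
    using bpn_lab[OF i, of t] ne unfolding par_def[of "Suc t"] P_Suc[OF i] by (auto simp: par_def) (metis empty_iff)+
qed

end



lemma funpow_period: "(f ^^ k) i = i \<Longrightarrow> (f ^^ (k * m)) i = (i::'a)"
proof (induction m)
  case 0 then show ?case by simp
next
  case (Suc m)
  have "(f ^^ (k * Suc m)) i = (f ^^ (k * m)) ((f ^^ k) i)" by (metis comp_apply funpow_add mult_Suc_right add.commute)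
  then show ?case using Suc by simp
qed

lemma orbit_back: "(f ^^ k) i = i \<Longrightarrow> 0 < k \<Longrightarrow> \<exists>m'. (f ^^ m') ((f ^^ m) i) = (i::'a)"
proof -
  assume a: "(f ^^ k) i = i" "0 < k"
  have le: "m \<le> k * m" using a(2) by simp
  have "(f ^^ (k * m - m)) ((f ^^ m) i) = (f ^^ (k * m - m + m)) i" by (simp add: funpow_add)
  also have "\<dots> = i" using le funpow_period[OF a(1)] by simp
  finally show ?thesis by blast
qed

lemma funpow_Suc_in: "(f ^^ Suc m) i = (f ^^ m) (f i)" by (simp only: funpow_Suc_right comp_apply)

context alg begin

definition "InvA t = (\<forall>i\<in>V. \<not> R t i \<and> P t i \<noteq> 0 \<longrightarrow> M t i \<le> M t (par t i))"
definition "InvB t = (\<forall>i\<in>V. R t i \<and> P t i \<noteq> 0 \<longrightarrow> R t (par t i))"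
definition "Acyc t = (\<forall>i\<in>V. \<forall>k>0. (par t ^^ k) i = i \<longrightarrow> P t i = 0)"

lemma parV: "i \<in> V \<Longrightarrow> par t i \<in> V" using par_V W_all by blast

lemma parV_pow: "i \<in> V \<Longrightarrow> (par t ^^ m) i \<in> V"
proof (induction m)
  case 0 then show ?case by simp
next
  case (Suc m) then show ?case using parV[of "(par t ^^ m) i" t] by (simp only: funpow.simps comp_apply)
qed

lemma hasch_par: "i \<in> V \<Longrightarrow> P t i \<noteq> 0 \<Longrightarrow> hasch t (par t i)"
  unfolding hasch_def using par_nbr[OF _ W_all] E_sym by blast

lemma par_eq_iff: "i \<in> V \<Longrightarrow> par t i = i \<longleftrightarrow> P t i = 0"
  using par_ne[OF _ W_all] par_root by blast

lemma mono_M: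
  assumes a: "InvA t" and i: "i \<in> V" and r: "\<not> R t i"
  shows "M t i \<le> M (Suc t) i"
proof (cases "P t i = 0")
  case True then show ?thesis using r by (auto simp: M_Suc[OF i])
next
  case False
  show ?thesis
  proof (cases "R t (par t i)")
    case True then show ?thesis using r False by (auto simp: M_Suc[OF i])
  next
    case nR: False
    have "M t i \<le> M t (par t i)" using a i r False unfolding InvA_def by blast
    also have "\<dots> \<le> bv t i" using bv_ge par_in_NPn[OF i W_all False nR] by blast
    finally show ?thesis using r False nR by (auto simp: M_Suc[OF i])
  qed
qed

lemma adopt_fact:
  assumes i: "i \<in> V" and r: "\<not> R (Suc t) i" and p: "P (Suc t) i \<noteq> 0"
  shows "par (Suc t) i \<in> NPn t i \<and> M t (par (Suc t) i) = M (Suc t) i"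
proof -
  have nR: "\<not> R t i" using r p by (auto simp: R_Suc[OF i] P_Suc[OF i] split: if_splits)
  show ?thesis
  proof (cases "P t i = 0")
    case True
    then have c: "NPn t i \<noteq> {} \<and> bv t i > u i t" "\<not> u i t < M t i"
      using nR r p by (auto simp: R_Suc[OF i] P_Suc[OF i] split: if_splits)
    then show ?thesis using bpn_ok[OF i c(1)[THEN conjunct1]] True nR
      by (auto simp: par_Suc[OF i] M_Suc[OF i])
  next
    case False
    then have c: "\<not> R t (par t i)" "\<not> u i t > bv t i"
      using nR r p by (auto simp: R_Suc[OF i] P_Suc[OF i] split: if_splits)
    have pn: "par t i \<in> NPn t i" using par_in_NPn[OF i W_all False c(1)] .
    hence ne: "NPn t i \<noteq> {}" by auto
    show ?thesis using bpn_ok[OF i ne] pn c nR False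
      by (auto simp: par_Suc[OF i] M_Suc[OF i])
  qed
qed

lemma InvA_0: "InvA 0" by (simp add: InvA_def P_def)
lemma InvB_0: "InvB 0" by (simp add: InvB_def P_def)
lemma Acyc_0: "Acyc 0" by (simp add: Acyc_def P_def)

lemma InvA_Suc: assumes a: "InvA t" shows "InvA (Suc t)"
  unfolding InvA_def
proof (intro ballI impI)
  fix i assume i: "i \<in> V" and h: "\<not> R (Suc t) i \<and> P (Suc t) i \<noteq> 0"
  have f: "par (Suc t) i \<in> NPn t i" "M t (par (Suc t) i) = M (Suc t) i" using adopt_fact[OF i] h by auto
  have "par (Suc t) i \<in> V" using parV[OF i] .
  moreover have "\<not> R t (par (Suc t) i)" using f(1) by (simp add: NPn_def)
  ultimately have "M t (par (Suc t) i) \<le> M (Suc t) (par (Suc t) i)" using mono_M[OF a] by blast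
  thus "M (Suc t) i \<le> M (Suc t) (par (Suc t) i)" using f(2) by simp
qed

lemma reset_keep:
  assumes i: "i \<in> V" and r: "R (Suc t) i" and p: "P (Suc t) i \<noteq> 0"
  shows "par (Suc t) i = par t i \<and> P t i \<noteq> 0 \<and> (R t i \<or> R t (par t i))"
  using r p by (auto simp: R_Suc[OF i] P_Suc[OF i] par_Suc[OF i] split: if_splits)

lemma InvB_Suc: assumes b: "InvB t" shows "InvB (Suc t)"
  unfolding InvB_def
proof (intro ballI impI)
  fix i assume i: "i \<in> V" and h: "R (Suc t) i \<and> P (Suc t) i \<noteq> 0"
  have k: "par (Suc t) i = par t i" "P t i \<noteq> 0" "R t i \<or> R t (par t i)" using reset_keep[OF i] h by auto
  have rp: "R t (par t i)" using k b i unfolding InvB_def by blast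
  have "hasch t (par t i)" using hasch_par[OF i k(2)] .
  hence "R (Suc t) (par t i)" using rp R_Suc[OF parV[OF i]] by simp
  thus "R (Suc t) (par (Suc t) i)" using k by simp
qed

lemma keep_normal:
  assumes a: "InvA t" and i: "i \<in> V" and r1: "\<not> R (Suc t) i" and p1: "P (Suc t) i \<noteq> 0"
    and r: "\<not> R t i" and m: "M t i = M (Suc t) i"
  shows "P t i \<noteq> 0 \<and> par (Suc t) i = par t i"
proof -
  have P0: "P t i \<noteq> 0"
  proof
    assume P0: "P t i = 0"
    then have "\<not> u i t < M t i" "NPn t i \<noteq> {} \<and> bv t i > u i t" using r r1 p1
      by (auto simp: R_Suc[OF i] P_Suc[OF i] split: if_splits)
    moreover have "M (Suc t) i = bv t i" using calculation r P0 by (simp add: M_Suc[OF i])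
    ultimately show False using m by linarith
  qed
  have c: "\<not> R t (par t i)" "\<not> u i t > bv t i"
    using P0 r r1 p1 by (auto simp: R_Suc[OF i] P_Suc[OF i] split: if_splits)
  have mb: "M (Suc t) i = bv t i" using P0 r c by (simp add: M_Suc[OF i])
  have "M t i \<le> M t (par t i)" using a i r P0 unfolding InvA_def by blast
  moreover have "M t (par t i) \<le> bv t i" using bv_ge par_in_NPn[OF i W_all P0 c(1)] by blast
  ultimately have "M t (par t i) = bv t i" using m mb by simp
  thus ?thesis using P0 r c by (simp add: par_Suc[OF i])
qed

end



lemma funpow_fix: "f x = x \<Longrightarrow> (f ^^ m) x = x"
  by (induction m) auto

context alg begin

lemma Acyc_Suc:
  assumes a: "InvA t" and b: "InvB t" and c: "Acyc t"
  shows "Acyc (Suc t)"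
  unfolding Acyc_def
proof (intro ballI allI impI)
  fix i k assume i: "i \<in> V" and k: "0 < k" and cyc: "(par (Suc t) ^^ k) i = i"
  let ?f = "par (Suc t)" and ?g = "par t"
  define Orb where "Orb = range (\<lambda>m. (?f ^^ m) i)"
  have a1: "InvA (Suc t)" and b1: "InvB (Suc t)" using InvA_Suc[OF a] InvB_Suc[OF b] .
  have iO: "i \<in> Orb" unfolding Orb_def by (metis funpow_0 rangeI)
  have OV: "x \<in> V" if "x \<in> Orb" for x using that parV_pow[OF i] unfolding Orb_def by auto
  have bk: "\<exists>m'. (?f ^^ m') x = i" if "x \<in> Orb" for x
    using that orbit_back[OF cyc k] unfolding Orb_def by auto
  have fO: "?f x \<in> Orb" if "x \<in> Orb" for x
    using that unfolding Orb_def by (auto simp del: funpow.simps simp: funpow.simps(2)[symmetric, THEN fun_cong, simplified] intro: rangeI)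
  have reach: "\<exists>m. (?f ^^ m) x = y" if hx: "x \<in> Orb" and hy: "y \<in> Orb" for x y
  proof -
    obtain a where ya: "y = (?f ^^ a) i" using hy unfolding Orb_def by auto
    obtain m' where "(?f ^^ m') x = i" using bk[OF hx] by auto
    hence "(?f ^^ (a + m')) x = y" using ya by (simp add: funpow_add)
    thus ?thesis by blast
  qed
  have Pne: "P (Suc t) x \<noteq> 0" if hx: "x \<in> Orb" and ne: "P (Suc t) i \<noteq> 0" for x
  proof
    assume "P (Suc t) x = 0"
    hence "?f x = x" by (rule par_root)
    hence "\<And>m. (?f ^^ m) x = x" by (rule funpow_fix)
    hence "x = i" using bk[OF hx] by metis
    thus False using ne \<open>P (Suc t) x = 0\<close> by simp
  qed
  have pred: "\<exists>z\<in>Orb. ?f z = y" if hy: "y \<in> Orb" for y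
  proof -
    obtain a where ya: "y = (?f ^^ a) i" using hy unfolding Orb_def by auto
    show ?thesis
    proof (cases a)
      case 0
      have "(?f ^^ Suc (k - 1)) i = i" using cyc k by simp
      hence "?f ((?f ^^ (k - 1)) i) = y" using ya 0 by simp
      thus ?thesis unfolding Orb_def by blast
    next
      case (Suc a')
      thus ?thesis using ya unfolding Orb_def by auto
    qed
  qed
  show "P (Suc t) i = 0"
  proof (rule ccontr)
    assume ne: "P (Suc t) i \<noteq> 0"
    have keep: "?f y = ?g y \<and> P t y \<noteq> 0" if yO: "y \<in> Orb" for y
    proof (cases "\<exists>x\<in>Orb. R (Suc t) x")
      case True
      then obtain x where xO: "x \<in> Orb" and rx: "R (Suc t) x" by auto
      have allR: "R (Suc t) ((?f ^^ m) x)" for m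
      proof (induction m)
        case 0 then show ?case using rx by simp
      next
        case (Suc m)
        have xm: "(?f ^^ m) x \<in> Orb"
        proof (induction m)
          case 0 then show ?case using xO by simp
        next
          case (Suc m) then show ?case using fO by simp
        qed
        have "R (Suc t) (?f ((?f ^^ m) x))"
          using b1 OV[OF xm] Suc Pne[OF xm ne] unfolding InvB_def by blast
        thus ?case by simp
      qed
      obtain m where "(?f ^^ m) x = y" using reach[OF xO yO] by auto
      hence "R (Suc t) y" using allR by metis
      thus ?thesis using reset_keep[OF OV[OF yO]] Pne[OF yO ne] by blast
    next
      case False
      have up: "M (Suc t) x \<le> M (Suc t) ((?f ^^ m) x)" if hx: "x \<in> Orb" for x m
      proof (induction m)
        case 0 then show ?case by simp
      next
        case (Suc m)
        have xm: "(?f ^^ m) x \<in> Orb"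
        proof (induction m)
          case 0 then show ?case using hx by simp
        next
          case (Suc m) then show ?case using fO by simp
        qed
        have "M (Suc t) ((?f ^^ m) x) \<le> M (Suc t) (?f ((?f ^^ m) x))"
          using a1 OV[OF xm] False xm Pne[OF xm ne] unfolding InvA_def by blast
        thus ?case using Suc by simp
      qed
      have eqM: "M (Suc t) x = M (Suc t) z" if hx: "x \<in> Orb" and hz: "z \<in> Orb" for x z
      proof -
        obtain m1 where "(?f ^^ m1) x = z" using reach[OF hx hz] by auto
        obtain m2 where "(?f ^^ m2) z = x" using reach[OF hz hx] by auto
        show ?thesis using up[OF hx, of m1] up[OF hz, of m2] \<open>(?f ^^ m1) x = z\<close> \<open>(?f ^^ m2) z = x\<close> by simp
      qed
      obtain z where zO: "z \<in> Orb" and fz: "?f z = y" using pred[OF yO] by auto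
      have ad: "?f z \<in> NPn t z \<and> M t (?f z) = M (Suc t) z"
        using adopt_fact[OF OV[OF zO]] False zO Pne[OF zO ne] by blast
      have ry: "\<not> R t y" and my: "M t y = M (Suc t) y"
        using ad fz eqM[OF zO yO] by (auto simp: NPn_def)
      show ?thesis using keep_normal[OF a OV[OF yO] _ Pne[OF yO ne] ry my] False yO by blast
    qed
    have gf: "(?g ^^ m) i = (?f ^^ m) i" for m
    proof (induction m)
      case 0 then show ?case by simp
    next
      case (Suc m)
      have "(?f ^^ m) i \<in> Orb" unfolding Orb_def by blast
      thus ?case using Suc keep by simp
    qed
    have "(?g ^^ k) i = i" using gf cyc by simp
    hence "P t i = 0" using c i k unfolding Acyc_def by blast
    thus False using keep[OF iO] by simp
  qed
qed

lemma inv_all: "InvA t \<and> InvB t \<and> Acyc t"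
  by (induction t) (auto intro: InvA_0 InvB_0 Acyc_0 InvA_Suc InvB_Suc Acyc_Suc)

end



lemma pigeon:
  fixes f :: "nat \<Rightarrow> nat"
  assumes "\<forall>m\<le>n. f m \<in> {1..n}"
  shows "\<exists>a b. a < b \<and> b \<le> n \<and> f a = f b"
proof (rule ccontr)
  assume nt: "\<not> ?thesis"
  have "inj_on f {0..n}"
  proof (rule inj_onI)
    fix x y assume xy: "x \<in> {0..n}" "y \<in> {0..n}" "f x = f y"
    show "x = y"
    proof (rule ccontr)
      assume "x \<noteq> y"
      then consider "x < y" | "y < x" by linarith
      then show False
      proof cases
        case 1
        from nt have "\<not> (x < y \<and> y \<le> n \<and> f x = f y)" by blast
        then show False using 1 xy by auto
      next
        case 2
        from nt have "\<not> (y < x \<and> x \<le> n \<and> f y = f x)" by blast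
        then show False using 2 xy by auto
      qed
    qed
  qed
  moreover have "f ` {0..n} \<subseteq> {1..n}"
  proof (rule image_subsetI)
    fix x assume "x \<in> {0..n}"
    hence "x \<le> n" by simp
    thus "f x \<in> {1..n}" using assms by blast
  qed
  ultimately have "card {0..n} \<le> card {1..n}" using card_inj_on_le[of f "{0..n}" "{1..n}"] by simp
  thus False by simp
qed

lemma mono_stab:
  fixes f :: "nat \<Rightarrow> real"
  assumes fin: "finite U" and inU: "\<forall>t\<ge>T. f t \<in> U" and mono: "\<forall>t\<ge>T. f t \<le> f (Suc t)"
  shows "\<exists>T2\<ge>T. \<forall>t\<ge>T2. f t = f T2"
proof -
  let ?S = "f ` {T..}"
  have finS: "finite ?S" using fin inU by (intro finite_subset[OF _ fin]) auto
  have "Max ?S \<in> ?S" using finS by (intro Max_in) auto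
  then obtain T2 where T2: "T2 \<ge> T" "f T2 = Max ?S" by auto
  have up: "f T2 \<le> f (T2 + d)" for d
  proof (induction d)
    case 0 then show ?case by simp
  next
    case (Suc d)
    have "f (T2 + d) \<le> f (Suc (T2 + d))" using mono T2(1) by simp
    then show ?case using Suc by simp
  qed
  have "f t = f T2" if "t \<ge> T2" for t
  proof -
    have "f t \<le> Max ?S" using finS that T2(1) by (intro Max_ge) auto
    moreover have "f T2 \<le> f t" using up[of "t - T2"] that by simp
    ultimately show ?thesis using T2(2) by simp
  qed
  thus ?thesis using T2(1) by blast
qed

context alg begin

lemma root_reach:
  assumes i: "i \<in> V"
  shows "P t ((par t ^^ n) i) = 0 \<and> (\<forall>k\<ge>n. (par t ^^ k) i = (par t ^^ n) i)"
proof -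
  have "\<forall>m\<le>n. (par t ^^ m) i \<in> {1..n}" using parV_pow[OF i] by blast
  then obtain a b where ab: "a < b" "b \<le> n" "(par t ^^ a) i = (par t ^^ b) i"
    using pigeon[of n "\<lambda>m. (par t ^^ m) i"] by blast
  let ?y = "(par t ^^ a) i"
  have "(par t ^^ (b - a)) ?y = (par t ^^ (b - a + a)) i" by (simp add: funpow_add)
  also have "\<dots> = ?y" using ab by simp
  finally have eq: "(par t ^^ (b - a)) ?y = ?y" .
  have ac: "Acyc t" using inv_all by blast
  have "P t ?y = 0" using ac[unfolded Acyc_def, rule_format, OF parV_pow[OF i, of a], of "b - a"] ab(1) eq by simp
  hence fy: "par t ?y = ?y" by (rule par_root)
  have k: "(par t ^^ k) i = ?y" if "k \<ge> a" for k
  proof -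
    have "(par t ^^ k) i = (par t ^^ (k - a)) ?y" using that by (metis comp_apply funpow_add le_add_diff_inverse2)
    thus ?thesis using funpow_fix[of "par t" ?y, OF fy] by simp
  qed
  have kn: "(par t ^^ n) i = ?y" using k[of n] ab(1,2) by linarith
  have "\<forall>k\<ge>n. (par t ^^ k) i = (par t ^^ n) i"
  proof (intro allI impI)
    fix k assume "k \<ge> n"
    hence "k \<ge> a" using ab by simp
    thus "(par t ^^ k) i = (par t ^^ n) i" using k[of k] kn by metis
  qed
  thus ?thesis using kn \<open>P t ?y = 0\<close> by simp
qed

lemma R_up: "i \<in> V \<Longrightarrow> R t i \<Longrightarrow> R t ((par t ^^ m) i)"
proof (induction m)
  case 0 then show ?case by simp
next
  case (Suc m)
  have y: "(par t ^^ m) i \<in> V" using parV_pow Suc by blast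
  show ?case
  proof (cases "P t ((par t ^^ m) i) = 0")
    case True then show ?thesis using Suc par_root by simp
  next
    case False then show ?thesis using Suc inv_all[of t] y unfolding InvB_def by simp
  qed
qed

definition "ch t x = {j. E x j \<and> par t j = x}"

lemma ch_fin: "finite (ch t x)"
  by (rule finite_subset[OF _ fin_nbrs[of x]]) (auto simp: ch_def nbrs_def)

lemma child_reset: assumes "R t x" "j \<in> ch (Suc t) x" shows "j \<in> ch t x \<and> R (Suc t) j"
proof -
  have ej: "E x j" "par (Suc t) j = x" using assms by (auto simp: ch_def)
  have j: "j \<in> V" using E_V ej by blast
  have xj: "x \<noteq> j" using ej E_irr by auto
  have P1: "P (Suc t) j \<noteq> 0" using ej xj par_root by metis
  have R1: "R (Suc t) j"
  proof (rule ccontr)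
    assume "\<not> R (Suc t) j"
    hence "x \<in> NPn t j" using adopt_fact[OF j _ P1] ej by auto
    thus False using assms by (simp add: NPn_def)
  qed
  thus ?thesis using reset_keep[OF j R1 P1] ej by (auto simp: ch_def)
qed

lemma reset_has_child: "x \<in> V \<Longrightarrow> R t x \<Longrightarrow> R (Suc t) x \<Longrightarrow> ch t x \<noteq> {}"
  using R_Suc[of x t] by (auto simp: hasch_def ch_def)

lemma chain:
  assumes c: "c \<in> V" and forever: "\<forall>t\<ge>t0. R t c"
  shows "\<exists>t1\<ge>t0. \<exists>x\<in>V. \<forall>t\<ge>t1. R t x \<and> (\<forall>m<k. P t ((par t ^^ m) x) \<noteq> 0) \<and> (par t ^^ k) x = c"
proof (induction k)
  case 0
  have "\<forall>t\<ge>t0. R t c \<and> (\<forall>m<0. P t ((par t ^^ m) c) \<noteq> 0) \<and> (par t ^^ 0) c = c" using forever by simp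
  then show ?case using c by blast
next
  case (Suc k)
  then obtain t1 x where t1: "t1 \<ge> t0" and x: "x \<in> V"
    and H: "\<forall>t\<ge>t1. R t x \<and> (\<forall>m<k. P t ((par t ^^ m) x) \<noteq> 0) \<and> (par t ^^ k) x = c" by blast
  have sub: "ch (Suc t) x \<subseteq> ch t x" if "t \<ge> t1" for t using child_reset H that by blast
  have nem: "ch t x \<noteq> {}" if "t \<ge> t1" for t using reset_has_child[OF x] H that by simp
  define cm where "cm = (LEAST m. \<exists>t\<ge>t1. card (ch t x) = m)"
  have "\<exists>t\<ge>t1. card (ch t x) = cm" unfolding cm_def by (rule LeastI[of _ "card (ch t1 x)"]) auto
  then obtain t2 where t2: "t2 \<ge> t1" "card (ch t2 x) = cm" by auto
  have minc: "cm \<le> card (ch t x)" if "t \<ge> t1" for t unfolding cm_def using that by (intro Least_le) auto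
  have subt: "ch (t2 + d) x \<subseteq> ch t2 x" for d
  proof (induction d)
    case 0 then show ?case by simp
  next
    case (Suc d) then show ?case using sub[of "t2 + d"] t2(1) by auto
  qed
  have eqc: "ch t x = ch t2 x" if "t \<ge> t2" for t
  proof -
    have s: "ch t x \<subseteq> ch t2 x" using subt[of "t - t2"] that by simp
    have "card (ch t2 x) \<le> card (ch t x)" using minc[of t] t2 that by simp
    thus ?thesis using card_subset_eq[OF ch_fin s] s by (metis card_mono ch_fin le_antisym)
  qed
  obtain j where j: "j \<in> ch t2 x" using nem[OF t2(1)] by auto
  have ej: "E x j" using j by (simp add: ch_def)
  have jV: "j \<in> V" using E_V ej by blast
  have pj: "par t j = x" if "t \<ge> t2" for t using eqc[OF that] j unfolding ch_def by blast
  have xj: "x \<noteq> j" using ej E_irr by auto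
  have Rj: "R t j" if ht: "t \<ge> Suc t2" for t
  proof -
    obtain s where s: "t = Suc s" "s \<ge> t2" using ht by (cases t) auto
    have "j \<in> ch (Suc s) x" using eqc[of "Suc s"] s j by simp
    thus ?thesis using child_reset[of s x j] H s t2 by simp
  qed
  have main: "\<forall>t\<ge>Suc t2. R t j \<and> (\<forall>m<Suc k. P t ((par t ^^ m) j) \<noteq> 0) \<and> (par t ^^ Suc k) j = c"
  proof (intro allI impI)
    fix t assume t: "Suc t2 \<le> t"
    have r: "R t j" using Rj t by simp
    have pjt: "par t j = x" using pj t by simp
    have xc: "(par t ^^ k) x = c" using H t t2 by simp
    have c1: "(par t ^^ Suc k) j = c" unfolding funpow_Suc_in pjt using xc .
    have c2: "\<forall>m<Suc k. P t ((par t ^^ m) j) \<noteq> 0"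
    proof (intro allI impI)
      fix m assume m: "m < Suc k"
      show "P t ((par t ^^ m) j) \<noteq> 0"
      proof (cases m)
        case 0 then show ?thesis using pjt xj par_root by fastforce
      next
        case (Suc m')
        have "P t ((par t ^^ m') x) \<noteq> 0" using H m Suc t t2 by simp
        then show ?thesis unfolding Suc funpow_Suc_in pjt .
      qed
    qed
    show "R t j \<and> (\<forall>m<Suc k. P t ((par t ^^ m) j) \<noteq> 0) \<and> (par t ^^ Suc k) j = c" using r c1 c2 by blast
  qed
  have "t0 \<le> Suc t2" using t1 t2 by simp
  thus ?case using main jV by blast
qed

lemma no_forever_reset: assumes c: "c \<in> V" shows "\<not> (\<forall>t\<ge>t0. R t c)"
proof
  assume f: "\<forall>t\<ge>t0. R t c"
  obtain t1 x where x: "x \<in> V" and H: "\<forall>m<Suc n. P t1 ((par t1 ^^ m) x) \<noteq> 0"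
    using chain[OF c f, of "Suc n"] by blast
  have "P t1 ((par t1 ^^ n) x) = 0" using root_reach[OF x] by blast
  thus False using H by auto
qed

end

locale alg_st = alg +
  fixes T' :: nat
  assumes stab: "\<And>i t. i \<in> {1..n} \<Longrightarrow> t \<ge> T' \<Longrightarrow> u i t = u i T'"
begin

lemma normal_root_M:
  assumes i: "i \<in> V" and r: "\<not> R (Suc s) i" and p: "P (Suc s) i = 0" shows "M (Suc s) i = u i s"
proof (cases "R s i")
  case True then show ?thesis using r by (simp add: R_Suc[OF i] M_Suc[OF i])
next
  case nR: False
  show ?thesis
  proof (cases "P s i = 0")
    case True
    have "\<not> (NPn s i \<noteq> {} \<and> bv s i > u i s)"
    proof
      assume h: "NPn s i \<noteq> {} \<and> bv s i > u i s"
      have "\<not> u i s < M s i" using r nR True by (simp add: R_Suc[OF i])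
      hence "P (Suc s) i = lab i (bpn s i)" using nR True h by (simp add: P_Suc[OF i])
      thus False using bpn_lab[OF i h[THEN conjunct1]] p by simp
    qed
    moreover have "\<not> u i s < M s i" using r nR True by (simp add: R_Suc[OF i])
    ultimately show ?thesis using nR True by (simp add: M_Suc[OF i])
  next
    case False
    have rp: "\<not> R s (par s i)" using r nR False by (simp add: R_Suc[OF i])
    have ne: "NPn s i \<noteq> {}" using par_in_NPn[OF i W_all False rp] by auto
    have "u i s > bv s i"
    proof (rule ccontr)
      assume h: "\<not> u i s > bv s i"
      have "P (Suc s) i = (if M s (par s i) = bv s i then P s i else lab i (bpn s i))"
        using nR False rp h by (simp add: P_Suc[OF i])
      thus False using p False bpn_lab[OF i ne] by (simp split: if_splits)
    qed
    thus ?thesis using nR False rp by (simp add: M_Suc[OF i])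
  qed
qed

lemma L1: "t \<ge> Suc T' \<Longrightarrow> i \<in> V \<Longrightarrow> \<not> R t i \<Longrightarrow> P t i = 0 \<Longrightarrow> M t i = u i t"
proof -
  assume a: "t \<ge> Suc T'" "i \<in> V" "\<not> R t i" "P t i = 0"
  obtain s where s: "t = Suc s" "s \<ge> T'" using a(1) by (cases t) auto
  have "M t i = u i s" using normal_root_M a s by simp
  also have "\<dots> = u i t"
  proof -
    have "u i s = u i T'" using stab[OF a(2), of s] s by blast
    moreover have "u i t = u i T'" using stab[OF a(2), of t] s a(1) by simp
    ultimately show ?thesis by simp
  qed
  finally show ?thesis .
qed

lemma L2: "t \<ge> Suc T' \<Longrightarrow> i \<in> V \<Longrightarrow> R (Suc t) i \<Longrightarrow> P (Suc t) i = 0 \<Longrightarrow> R t i \<and> P t i = 0"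
proof -
  assume a: "t \<ge> Suc T'" "i \<in> V" "R (Suc t) i" "P (Suc t) i = 0"
  have "(R t i \<and> P t i = 0) \<or> (\<not> R t i \<and> P t i = 0 \<and> u i t < M t i)"
    using a(2-4) by (auto simp: R_Suc P_Suc split: if_splits)
  thus ?thesis using L1[OF a(1,2)] by auto
qed

lemma L4: "i \<in> V \<Longrightarrow> \<exists>T. \<forall>t\<ge>T. \<not> (R t i \<and> P t i = 0)"
proof -
  assume i: "i \<in> V"
  obtain s where s: "s \<ge> Suc T'" "\<not> R s i" using no_forever_reset[OF i, of "Suc T'"] by auto
  have "\<not> (R (s + d) i \<and> P (s + d) i = 0)" for d
  proof (induction d)
    case 0 then show ?case using s by simp
  next
    case (Suc d)
    show ?case
    proof
      assume h: "R (s + Suc d) i \<and> P (s + Suc d) i = 0"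
      have "R (s + d) i \<and> P (s + d) i = 0" using L2[of "s + d" i] i s h by simp
      with Suc.IH show False by simp
    qed
  qed
  hence "\<forall>t\<ge>s. \<not> (R t i \<and> P t i = 0)" by (metis le_add_diff_inverse)
  thus ?thesis by blast
qed

lemma L5: "\<exists>T1\<ge>Suc T'. \<forall>t\<ge>T1. \<forall>i\<in>V. \<not> R t i"
proof -
  have "\<forall>i\<in>V. \<exists>T. \<forall>t\<ge>T. \<not> (R t i \<and> P t i = 0)" using L4 by blast
  then obtain Tf where Tf: "\<forall>i\<in>V. \<forall>t\<ge>Tf i. \<not> (R t i \<and> P t i = 0)" by metis
  define T1 where "T1 = Suc T' + sum Tf V"
  have le: "i \<in> V \<Longrightarrow> Tf i \<le> T1" for i unfolding T1_def using member_le_sum[of i V Tf] by auto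
  have "\<forall>t\<ge>T1. \<forall>i\<in>V. \<not> R t i"
  proof (intro allI impI ballI)
    fix t i assume t: "t \<ge> T1" and i: "i \<in> V"
    show "\<not> R t i"
    proof
      assume r: "R t i"
      let ?r = "(par t ^^ n) i"
      have rV: "?r \<in> V" using parV_pow[OF i] .
      have "R t ?r" using R_up[OF i r] .
      moreover have "P t ?r = 0" using root_reach[OF i] by blast
      moreover have "t \<ge> Tf ?r" using le[OF rV] t by simp
      ultimately show False using Tf rV by blast
    qed
  qed
  moreover have "T1 \<ge> Suc T'" unfolding T1_def by simp
  ultimately show ?thesis by blast
qed

end



context alg_st begin

lemma stable_local:
  assumes i: "i \<in> V" and t: "t \<ge> Suc T'" and alln: "\<forall>j\<in>V. \<not> R t j" and c: "M (Suc t) i = M t i"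
  shows "(\<forall>j. E i j \<longrightarrow> M t j \<le> M t i) \<and> u i t \<le> M t i"
proof -
  have ri: "\<not> R t i" using alln i by blast
  have inN: "j \<in> NPn t i" if "E i j" for j using that alln E_V by (auto simp: NPn_def)
  show ?thesis
  proof (cases "P t i = 0")
    case True
    have mu: "M t i = u i t" using L1[OF t i ri True] .
    have nlt: "\<not> u i t < M t i" using mu by simp
    have nad: "\<not> (NPn t i \<noteq> {} \<and> bv t i > u i t)"
    proof
      assume h: "NPn t i \<noteq> {} \<and> bv t i > u i t"
      hence "M (Suc t) i = bv t i" using ri True nlt by (simp add: M_Suc[OF i])
      thus False using c mu h by simp
    qed
    have "M t j \<le> M t i" if "E i j" for j
    proof -
      have "j \<in> NPn t i" using inN[OF that] .
      hence "M t j \<le> bv t i" "NPn t i \<noteq> {}" using bv_ge by auto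
      thus ?thesis using nad mu by simp
    qed
    thus ?thesis using mu by simp
  next
    case False
    have rp: "\<not> R t (par t i)" using alln parV[OF i] by blast
    have pn: "par t i \<in> NPn t i" using par_in_NPn[OF i W_all False rp] .
    have le1: "M t i \<le> M t (par t i)" using inv_all[of t] i ri False unfolding InvA_def by blast
    have le2: "M t (par t i) \<le> bv t i" using bv_ge[OF pn] .
    have nd: "\<not> u i t > bv t i"
    proof
      assume h: "u i t > bv t i"
      hence "M (Suc t) i = u i t" using ri False rp by (simp add: M_Suc[OF i])
      thus False using c h le1 le2 by simp
    qed
    have mb: "M t i = bv t i" using c ri False rp nd by (simp add: M_Suc[OF i])
    have "M t j \<le> M t i" if "E i j" for j using bv_ge[OF inN[OF that]] mb by simp
    thus ?thesis using nd mb by simp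
  qed
qed

lemma final:
  "\<exists>T''. \<forall>t\<ge>T''. (\<forall>i\<in>V. M t i = Max {u j t | j. j \<in> V}) \<and>
     (\<forall>i\<in>V. \<exists>j\<in>V. (\<forall>k\<ge>n. (par t ^^ k) i = j) \<and> M t i = u j t)"
proof -
  obtain T1 where T1: "T1 \<ge> Suc T'" "\<forall>t\<ge>T1. \<forall>i\<in>V. \<not> R t i" using L5 by blast
  have st: "\<exists>T2\<ge>T1. \<forall>t\<ge>T2. M t i = M T2 i" if i: "i \<in> V" for i
  proof (rule mono_stab[OF finU])
    show "\<forall>t\<ge>T1. M t i \<in> U" using W_all i unfolding W_def by blast
    show "\<forall>t\<ge>T1. M t i \<le> M (Suc t) i"
      using mono_M inv_all T1(2) i by blast
  qed
  then obtain Tf where Tf: "\<forall>i\<in>V. Tf i \<ge> T1 \<and> (\<forall>t\<ge>Tf i. M t i = M (Tf i) i)" by metis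
  define T2 where "T2 = T1 + sum Tf V"
  have le: "i \<in> V \<Longrightarrow> Tf i \<le> T2" for i unfolding T2_def using member_le_sum[of i V Tf] by auto
  have cst: "M (Suc t) i = M t i" if "t \<ge> T2" "i \<in> V" for t i
  proof -
    have "t \<ge> Tf i" using le[OF that(2)] that(1) by simp
    thus ?thesis using Tf that(2) by (metis le_SucI)
  qed
  have T12: "T1 \<le> T2" unfolding T2_def by simp
  have "\<forall>t\<ge>T2. (\<forall>i\<in>V. M t i = Max {u j t | j. j \<in> V}) \<and>
     (\<forall>i\<in>V. \<exists>j\<in>V. (\<forall>k\<ge>n. (par t ^^ k) i = j) \<and> M t i = u j t)"
  proof (intro allI impI)
    fix t assume t: "t \<ge> T2"
    have alln: "\<forall>j\<in>V. \<not> R t j" using T1(2) t T12 by simp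
    have tT: "t \<ge> Suc T'" using T1(1) T12 t by simp
    have loc: "(\<forall>j. E i j \<longrightarrow> M t j \<le> M t i) \<and> u i t \<le> M t i" if "i \<in> V" for i
      using stable_local[OF that tT alln cst[OF t that]] .
    have eqE: "M t j = M t i" if "E\<^sup>*\<^sup>* i j" "i \<in> V" for i j
      using that
    proof (induction rule: rtranclp_induct)
      case base then show ?case by simp
    next
      case (step y z)
      have yV: "y \<in> V" and zV: "z \<in> V" using E_V step(2) by auto
      have "M t z \<le> M t y" using loc[OF yV] step(2) by blast
      moreover have "M t y \<le> M t z" using loc[OF zV] E_sym[OF step(2)] by blast
      ultimately show ?case using step by simp
    qed
    have allEq: "M t j = M t i" if "i \<in> V" "j \<in> V" for i j using eqE E_conn that by blast
    have res: "(\<forall>k\<ge>n. (par t ^^ k) i = (par t ^^ n) i) \<and> (par t ^^ n) i \<in> V \<and> M t i = u ((par t ^^ n) i) t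
       \<and> M t i = Max {u j t | j. j \<in> V}" if i: "i \<in> V" for i
    proof -
      let ?r = "(par t ^^ n) i"
      have rr0: "P t ?r = 0 \<and> (\<forall>k\<ge>n. (par t ^^ k) i = ?r)" by (rule root_reach[OF i])
      note rr = rr0[THEN conjunct1] rr0[THEN conjunct2]
      have rV: "?r \<in> V" using parV_pow[OF i] .
      have mr: "M t ?r = u ?r t" using L1[OF tT rV] alln rV rr(1) by blast
      have mi: "M t i = u ?r t" using allEq[OF i rV] mr by simp
      have fin: "finite {u j t | j. j \<in> V}" by simp
      have mx: "Max {u j t | j. j \<in> V} = u ?r t"
      proof (rule Max_eqI[OF fin])
        fix y assume "y \<in> {u j t | j. j \<in> V}"
        then obtain j where j: "j \<in> V" "y = u j t" by auto
        have "u j t \<le> M t j" using loc[OF j(1)] by blast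
        also have "\<dots> = u ?r t" using allEq[OF j(1) rV] mr by simp
        finally show "y \<le> u ?r t" using j by simp
      next
        show "u ?r t \<in> {u j t | j. j \<in> V}" using rV by blast
      qed
      show ?thesis
        apply (intro conjI)
           apply (rule rr(2))
          apply (rule rV)
         apply (rule mi)
        using mi mx by simp
    qed
    show "(\<forall>i\<in>V. M t i = Max {u j t | j. j \<in> V}) \<and>
     (\<forall>i\<in>V. \<exists>j\<in>V. (\<forall>k\<ge>n. (par t ^^ k) i = j) \<and> M t i = u j t)"
      using res by blast
  qed
  thus ?thesis by blast
qed

end



definition SS :: "real set \<Rightarrow> nat \<Rightarrow> (real \<times> nat \<times> bool) set" where "SS U d = U \<times> {0..d} \<times> UNIV"
definition "encS U d = (SOME h. bij_betw h (SS U d) {0..<card (SS U d)})"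
definition "decS U d = the_inv_into (SS U d) (encS U d)"
definition SM :: "real set \<Rightarrow> (real \<times> bool \<times> bool) set" where "SM U = U \<times> UNIV \<times> UNIV"
definition "encM U = (SOME h. bij_betw h (SM U) {0..<card (SM U)})"
definition "decM U = the_inv_into (SM U) (encM U)"
definition "QA U d = card (SS U d)"
definition "initA U u0 d = encS U d (u0, 0, False)"
definition "deltaA U d s v r = (let x = lstep d (decS U d s) v (\<lambda>q. decM U (r q)) in if x \<in> SS U d then encS U d x else 0)"
definition "msgA U d s q = encM U (fst (decS U d s), snd (snd (decS U d s)), fst (snd (decS U d s)) = q)"
definition "MoutA U d s = fst (decS U d s)"
definition "PoutA U d s = fst (snd (decS U d s))"

lemma deltaA_eq: "lstep d (decS U d s) v (\<lambda>q. decM U (r q)) = x \<Longrightarrow> x \<in> SS U d \<Longrightarrow> deltaA U d s v r = encS U d x"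
  unfolding deltaA_def Let_def by simp

lemma finSS: "finite U \<Longrightarrow> finite (SS U d)" by (simp add: SS_def)
lemma finSM: "finite U \<Longrightarrow> finite (SM U)" by (simp add: SM_def)

lemma encS_bij: assumes "finite U" shows "bij_betw (encS U d) (SS U d) {0..<QA U d}"
proof -
  have "\<exists>h. bij_betw h (SS U d) {0..<card (SS U d)}" by (rule ex_bij_betw_finite_nat[OF finSS[OF assms]])
  then show ?thesis unfolding encS_def QA_def by (rule someI_ex)
qed

lemma encM_bij: assumes "finite U" shows "bij_betw (encM U) (SM U) {0..<card (SM U)}"
proof -
  have "\<exists>h. bij_betw h (SM U) {0..<card (SM U)}" by (rule ex_bij_betw_finite_nat[OF finSM[OF assms]])
  then show ?thesis unfolding encM_def by (rule someI_ex)
qed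

lemma decS_encS: "finite U \<Longrightarrow> x \<in> SS U d \<Longrightarrow> decS U d (encS U d x) = x"
  unfolding decS_def using encS_bij bij_betw_imp_inj_on the_inv_into_f_f by metis

lemma encS_lt: "finite U \<Longrightarrow> x \<in> SS U d \<Longrightarrow> encS U d x < QA U d"
  using encS_bij[of U d] unfolding bij_betw_def by auto

lemma decS_in: "finite U \<Longrightarrow> s < QA U d \<Longrightarrow> decS U d s \<in> SS U d"
  unfolding decS_def using encS_bij[of U d]
  by (intro the_inv_into_into) (auto simp: bij_betw_def)

lemma decM_encM: "finite U \<Longrightarrow> x \<in> SM U \<Longrightarrow> decM U (encM U x) = x"
  unfolding decM_def using encM_bij bij_betw_imp_inj_on the_inv_into_f_f by metis

lemma QA_card: "finite U \<Longrightarrow> QA U d = card U * (d + 1) * 2"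
  by (simp add: QA_def SS_def card_cartesian_product)

context alg begin

abbreviation "runA \<equiv> run E lab (initA U u0) (deltaA U) (msgA U) u"

lemma inSS: "i \<in> V \<Longrightarrow> arun t i \<in> SS U (deg E i)"
  using W_all[of t] unfolding W_def SS_def by (auto simp: arun_eq)

lemma sim: "i \<in> V \<Longrightarrow> runA t i = encS U (deg E i) (arun t i)"
proof (induction t arbitrary: i)
  case 0 then show ?case by (simp add: initA_def)
next
  case (Suc t)
  let ?nb = "\<lambda>q. let j = port_nbr E lab i q in (fst (arun t j), snd (snd (arun t j)), fst (snd (arun t j)) = lab j i)"
  let ?r = "\<lambda>p. if p \<in> {1..deg E i} then (let j = port_nbr E lab i p in msgA U (deg E j) (runA t j) (lab j i)) else 0"
  have d1: "decS U (deg E i) (runA t i) = arun t i" using Suc decS_encS[OF finU inSS] by simp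
  have nbq: "decM U (?r q) = ?nb q" if q: "q \<in> {1..deg E i}" for q
  proof -
    let ?j = "port_nbr E lab i q"
    have jV: "?j \<in> V" using port_nbr_ok[OF Suc.prems q] E_V by blast
    have dj: "decS U (deg E ?j) (runA t ?j) = arun t ?j" using Suc.IH[OF jV] decS_encS[OF finU inSS[OF jV]] by simp
    have inM: "(fst (arun t ?j), snd (snd (arun t ?j)), fst (snd (arun t ?j)) = lab ?j i) \<in> SM U"
      using inSS[OF jV, of t] by (auto simp: SM_def SS_def)
    show ?thesis using q dj decM_encM[OF finU inM] by (simp add: msgA_def Let_def)
  qed
  have pd: "fst (snd (arun t i)) \<le> deg E i" using inSS[OF Suc.prems, of t] by (auto simp: SS_def)
  have "lstep (deg E i) (arun t i) (u i t) (\<lambda>q. decM U (?r q)) = lstep (deg E i) (arun t i) (u i t) ?nb"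
    by (rule lstep_cong[OF nbq pd])
  also have "\<dots> = arun (Suc t) i" by simp
  finally have ls: "lstep (deg E i) (decS U (deg E i) (runA t i)) (u i t) (\<lambda>q. decM U (?r q)) = arun (Suc t) i"
    using d1 by simp
  have "runA (Suc t) i = deltaA U (deg E i) (runA t i) (u i t) ?r" by simp
  also have "\<dots> = encS U (deg E i) (arun (Suc t) i)"
    by (rule deltaA_eq[OF ls inSS[OF Suc.prems]])
  finally show ?case .
qed

lemma Mout_sim: "i \<in> V \<Longrightarrow> MoutA U (deg E i) (runA t i) = M t i"
  using sim decS_encS[OF finU inSS] by (simp add: MoutA_def M_def)

lemma ptr_sim: "i \<in> V \<Longrightarrow> ptr E lab (PoutA U) (runA t) i = par t i"
  using sim decS_encS[OF finU inSS] by (simp add: PoutA_def ptr_def par_def P_def Let_def)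

lemma ptr_pow_sim: "i \<in> V \<Longrightarrow> (ptr E lab (PoutA U) (runA t) ^^ k) i = (par t ^^ k) i"
proof (induction k)
  case 0 then show ?case by simp
next
  case (Suc k)
  have "(par t ^^ k) i \<in> V" using parV_pow Suc.prems by blast
  then show ?case using Suc ptr_sim by simp
qed

end




lemma bound_nat: "N \<ge> 2 \<Longrightarrow> N * (d + 1) * 2 \<le> N ^ 2 * 4 ^ d"
proof -
  assume N: "N \<ge> (2::nat)"
  have a: "2 * N \<le> N ^ 2" using N by (simp add: power2_eq_square)
  have b: "d + 1 \<le> (4::nat) ^ d"
  proof -
    have "d < 2 ^ d" by simp
    also have "(2::nat) ^ d \<le> 4 ^ d" by (simp add: power_mono)
    finally show ?thesis by simp
  qed
  have "N * (d + 1) * 2 = (2 * N) * (d + 1)" by simp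
  also have "\<dots> \<le> N ^ 2 * 4 ^ d" using mult_le_mono[OF a b] .
  finally show ?thesis .
qed

lemma bound_real:
  assumes N: "N \<ge> (2::nat)"
  shows "real (N * (d + 1) * 2) \<le> 2 powr (2 * (log 2 (real N) + real d))"
proof -
  have "2 powr (2 * (log 2 (real N) + real d)) = (2 powr (log 2 (real N))) powr 2 * 2 powr (real (2 * d))"
    by (simp add: powr_add powr_powr algebra_simps)
  also have "\<dots> = real N powr 2 * 2 ^ (2 * d)"
  proof -
    have h: "(2::real) powr (real (2 * d)) = 2 ^ (2 * d)" by (rule powr_realpow) simp
    show ?thesis using N h by simp
  qed
  also have "\<dots> = real (N ^ 2 * 4 ^ d)" using N by (simp add: power_mult powr_realpow')
  finally have e: "2 powr (2 * (log 2 (real N) + real d)) = real (N ^ 2 * 4 ^ d)" .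
  show ?thesis unfolding e of_nat_le_iff by (rule bound_nat[OF N])
qed

theorem theorem5:
  "\<exists>C::real. \<forall>U::real set. finite U \<and> U \<noteq> {} \<longrightarrow>
     (\<exists>Q init delta msg Mout Pout.
        valid_automata U C Q init delta Mout Pout \<and>
        (\<forall>n E lab (u :: nat \<Rightarrow> nat \<Rightarrow> real).
           network n E lab \<longrightarrow>
           (\<forall>i\<in>{1..n}. \<forall>t. u i t \<in> U) \<longrightarrow>
           (\<exists>T'. \<forall>i\<in>{1..n}. \<forall>t\<ge>T'. u i t = u i T') \<longrightarrow>
           (\<exists>T''. \<forall>t\<ge>T''.
              let x = run E lab init delta msg u t in
              (\<forall>i\<in>{1..n}. Mout (deg E i) (x i) = Max {u j t | j. j \<in> {1..n}}) \<and>
              (\<forall>i\<in>{1..n}. \<exists>j\<in>{1..n}. \<exists>K0::nat.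
                 (\<forall>k\<ge>K0. (ptr E lab Pout x ^^ k) i = j) \<and>
                 Mout (deg E i) (x i) = u j t))))"
proof (intro exI[of _ 2] allI impI)
  fix U :: "real set" assume U: "finite U \<and> U \<noteq> {}"
  show "\<exists>Q init delta msg Mout Pout.
        valid_automata U 2 Q init delta Mout Pout \<and>
        (\<forall>n E lab (u :: nat \<Rightarrow> nat \<Rightarrow> real).
           network n E lab \<longrightarrow>
           (\<forall>i\<in>{1..n}. \<forall>t. u i t \<in> U) \<longrightarrow>
           (\<exists>T'. \<forall>i\<in>{1..n}. \<forall>t\<ge>T'. u i t = u i T') \<longrightarrow>
           (\<exists>T''. \<forall>t\<ge>T''.
              let x = run E lab init delta msg u t in
              (\<forall>i\<in>{1..n}. Mout (deg E i) (x i) = Max {u j t | j. j \<in> {1..n}}) \<and>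
              (\<forall>i\<in>{1..n}. \<exists>j\<in>{1..n}. \<exists>K0::nat.
                 (\<forall>k\<ge>K0. (ptr E lab Pout x ^^ k) i = j) \<and>
                 Mout (deg E i) (x i) = u j t)))"
  proof (cases "card U = 1")
    case True
    then obtain a where Ua: "U = {a}" by (rule card_1_singletonE)
    let ?Q = "\<lambda>d::nat. 1::nat" and ?init = "\<lambda>d::nat. 0::nat"
    let ?delta = "\<lambda>(d::nat) (s::nat) (v::real) (r::nat\<Rightarrow>nat). 0::nat" and ?msg = "\<lambda>(d::nat) (s::nat) (p::nat). 0::nat"
    let ?Mout = "\<lambda>(d::nat) (s::nat). a" and ?Pout = "\<lambda>(d::nat) (s::nat). 0::nat"
    have va: "valid_automata U 2 ?Q ?init ?delta ?Mout ?Pout"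
      unfolding valid_automata_def using Ua by (auto intro: ge_one_powr_ge_zero)
    have main: "\<exists>T''. \<forall>t\<ge>T''.
              let x = run E lab ?init ?delta ?msg u t in
              (\<forall>i\<in>{1..n}. ?Mout (deg E i) (x i) = Max {u j t | j. j \<in> {1..n}}) \<and>
              (\<forall>i\<in>{1..n}. \<exists>j\<in>{1..n}. \<exists>K0::nat.
                 (\<forall>k\<ge>K0. (ptr E lab ?Pout x ^^ k) i = j) \<and>
                 ?Mout (deg E i) (x i) = u j t)"
      if net: "network n E lab" and uin: "\<forall>i\<in>{1..n}. \<forall>t. u i t \<in> U" for n E lab and u :: "nat \<Rightarrow> nat \<Rightarrow> real"
    proof -
      have n1: "n \<ge> 1" using net unfolding network_def by simp
      have ua: "u i t = a" if "i \<in> {1..n}" for i t using uin that Ua by auto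
      have mx: "Max {u j t | j. j \<in> {1..n}} = a" for t
      proof -
        have "{u j t | j. j \<in> {1..n}} = {a}"
        proof
          show "{u j t | j. j \<in> {1..n}} \<subseteq> {a}" using ua by auto
          have "u 1 t = a" using ua n1 by simp
          thus "{a} \<subseteq> {u j t | j. j \<in> {1..n}}" using n1 by force
        qed
        thus ?thesis by simp
      qed
      have pt: "(ptr E lab ?Pout x ^^ k) i = i" for x k i
        by (rule funpow_fix) (simp add: ptr_def)
      show ?thesis using mx pt ua by (auto simp: Let_def)
    qed
    show ?thesis using va main by blast
  next
    case False
    have N2: "card U \<ge> 2" using False U by (metis One_nat_def Suc_1 card_0_eq less_2_cases not_less)
    have fin: "finite U" using U by simp
    define u0 where "u0 = (SOME x. x \<in> U)"
    have u0U: "u0 \<in> U" unfolding u0_def using U by (simp add: some_in_eq)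
    have QAp: "0 < QA U d" for d using QA_card[OF fin, of d] N2 by simp
    have va: "valid_automata U 2 (QA U) (initA U u0) (deltaA U) (MoutA U) (PoutA U)"
    proof -
      have a1: "initA U u0 d < QA U d" for d unfolding initA_def using u0U by (intro encS_lt[OF fin]) (auto simp: SS_def)
      have a2: "real (QA U d) \<le> 2 powr (2 * (log 2 (real (card U)) + real d))" for d
        unfolding QA_card[OF fin] by (rule bound_real[OF N2])
      have a3: "\<forall>s<QA U d. \<forall>v\<in>U. \<forall>r. deltaA U d s v r < QA U d" for d
        using encS_lt[OF fin] QAp by (auto simp: deltaA_def Let_def)
      have a4: "\<forall>s<QA U d. MoutA U d s \<in> U \<and> PoutA U d s \<le> d" for d
      proof (intro allI impI)
        fix s assume "s < QA U d"
        hence "decS U d s \<in> SS U d" by (rule decS_in[OF fin])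
        thus "MoutA U d s \<in> U \<and> PoutA U d s \<le> d" by (auto simp: MoutA_def PoutA_def SS_def mem_Times_iff)
      qed
      show ?thesis unfolding valid_automata_def using a1 a2 a3 a4 by blast
    qed
    have main: "\<exists>T''. \<forall>t\<ge>T''.
              let x = run E lab (initA U u0) (deltaA U) (msgA U) u t in
              (\<forall>i\<in>{1..n}. MoutA U (deg E i) (x i) = Max {u j t | j. j \<in> {1..n}}) \<and>
              (\<forall>i\<in>{1..n}. \<exists>j\<in>{1..n}. \<exists>K0::nat.
                 (\<forall>k\<ge>K0. (ptr E lab (PoutA U) x ^^ k) i = j) \<and>
                 MoutA U (deg E i) (x i) = u j t)"
      if net: "network n E lab" and uin: "\<forall>i\<in>{1..n}. \<forall>t. u i t \<in> U"
        and st: "\<exists>T'. \<forall>i\<in>{1..n}. \<forall>t\<ge>T'. u i t = u i T'" for n E lab and u :: "nat \<Rightarrow> nat \<Rightarrow> real"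
    proof -
      obtain T' where T': "\<forall>i\<in>{1..n}. \<forall>t\<ge>T'. u i t = u i T'" using st by blast
      interpret alg_st n E lab u U u0 T'
        apply unfold_locales
        using net apply blast
        using uin apply blast
        using fin apply blast
        using u0U apply blast
        using T' apply blast
        done
      obtain T'' where T'': "\<forall>t\<ge>T''. (\<forall>i\<in>V. M t i = Max {u j t | j. j \<in> V}) \<and>
        (\<forall>i\<in>V. \<exists>j\<in>V. (\<forall>k\<ge>n. (par t ^^ k) i = j) \<and> M t i = u j t)" using final by blast
      have "\<forall>t\<ge>T''.
              let x = runA t in
              (\<forall>i\<in>{1..n}. MoutA U (deg E i) (x i) = Max {u j t | j. j \<in> {1..n}}) \<and>
              (\<forall>i\<in>{1..n}. \<exists>j\<in>{1..n}. \<exists>K0::nat.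
                 (\<forall>k\<ge>K0. (ptr E lab (PoutA U) x ^^ k) i = j) \<and>
                 MoutA U (deg E i) (x i) = u j t)"
      proof (intro allI impI)
        fix t assume t: "t \<ge> T''"
        have A: "\<forall>i\<in>V. MoutA U (deg E i) (runA t i) = Max {u j t | j. j \<in> V}"
          using T'' t Mout_sim by simp
        have B: "\<forall>i\<in>V. \<exists>j\<in>V. \<exists>K0::nat. (\<forall>k\<ge>K0. (ptr E lab (PoutA U) (runA t) ^^ k) i = j) \<and>
                 MoutA U (deg E i) (runA t i) = u j t"
        proof
          fix i assume i: "i \<in> V"
          obtain j where j: "j \<in> V" "\<forall>k\<ge>n. (par t ^^ k) i = j" "M t i = u j t" using T'' t i by blast
          show "\<exists>j\<in>V. \<exists>K0::nat. (\<forall>k\<ge>K0. (ptr E lab (PoutA U) (runA t) ^^ k) i = j) \<and>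
                 MoutA U (deg E i) (runA t i) = u j t"
            using j ptr_pow_sim[OF i] Mout_sim[OF i] by metis
        qed
        show "let x = runA t in
              (\<forall>i\<in>{1..n}. MoutA U (deg E i) (x i) = Max {u j t | j. j \<in> {1..n}}) \<and>
              (\<forall>i\<in>{1..n}. \<exists>j\<in>{1..n}. \<exists>K0::nat.
                 (\<forall>k\<ge>K0. (ptr E lab (PoutA U) x ^^ k) i = j) \<and>
                 MoutA U (deg E i) (x i) = u j t)"
          unfolding Let_def using A B by blast
      qed
      thus ?thesis by blast
    qed
    show ?thesis using va main by blast
  qed
qed


end
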